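(* Every $\cap$-edge simplicial graph is split.
   Context: A clique $C$ is simplicial if $C=N[v]$ for some vertex $v$; a graph is edge simplicial if every edge lies in a simplicial clique; it is $\cap$-edge simplicial if both it and its complement are edge simplicial. A graph is split if its vertex set can be partitioned into a clique and a stable set. *)

theory Defs
  imports Main
begin

definition graph :: "'a set \<Rightarrow> ('a \<Rightarrow> 'a \<Rightarrow> bool) \<Rightarrow> bool" where
  "graph V E \<longleftrightarrow> (\<forall>x y. E x y \<longrightarrow> x \<in> V \<and> y \<in> V \<and> x \<noteq> y \<and> E y x)"

definition complement :: "'a set \<Rightarrow> ('a \<Rightarrow> 'a \<Rightarrow> bool) \<Rightarrow> ('a \<Rightarrow> 'a \<Rightarrow> bool)" where
  "complement V E = (\<lambda>x y. x \<in> V \<and> y \<in> V \<and> x \<noteq> y \<and> \<not> E x y)"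

definition closed_nbhd :: "'a set \<Rightarrow> ('a \<Rightarrow> 'a \<Rightarrow> bool) \<Rightarrow> 'a \<Rightarrow> 'a set" where
  "closed_nbhd V E v = insert v {u \<in> V. E v u}"

definition is_clique :: "'a set \<Rightarrow> ('a \<Rightarrow> 'a \<Rightarrow> bool) \<Rightarrow> 'a set \<Rightarrow> bool" where
  "is_clique V E C \<longleftrightarrow> C \<subseteq> V \<and> (\<forall>x\<in>C. \<forall>y\<in>C. x \<noteq> y \<longrightarrow> E x y)"

definition is_stable :: "'a set \<Rightarrow> ('a \<Rightarrow> 'a \<Rightarrow> bool) \<Rightarrow> 'a set \<Rightarrow> bool" where
  "is_stable V E S \<longleftrightarrow> S \<subseteq> V \<and> (\<forall>x\<in>S. \<forall>y\<in>S. \<not> E x y)"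

definition simplicial_clique :: "'a set \<Rightarrow> ('a \<Rightarrow> 'a \<Rightarrow> bool) \<Rightarrow> 'a set \<Rightarrow> bool" where
  "simplicial_clique V E C \<longleftrightarrow> is_clique V E C \<and> (\<exists>v\<in>V. C = closed_nbhd V E v)"

definition edge_simplicial :: "'a set \<Rightarrow> ('a \<Rightarrow> 'a \<Rightarrow> bool) \<Rightarrow> bool" where
  "edge_simplicial V E \<longleftrightarrow>
     (\<forall>x y. E x y \<longrightarrow> (\<exists>C. simplicial_clique V E C \<and> x \<in> C \<and> y \<in> C))"

definition cap_edge_simplicial :: "'a set \<Rightarrow> ('a \<Rightarrow> 'a \<Rightarrow> bool) \<Rightarrow> bool" where
  "cap_edge_simplicial V E \<longleftrightarrow> edge_simplicial V E \<and> edge_simplicial V (complement V E)"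

definition split_graph :: "'a set \<Rightarrow> ('a \<Rightarrow> 'a \<Rightarrow> bool) \<Rightarrow> bool" where
  "split_graph V E \<longleftrightarrow>
     (\<exists>K S. K \<union> S = V \<and> K \<inter> S = {} \<and> is_clique V E K \<and> is_stable V E S)"

end

theory Submission
  imports Defs
begin

lemma F1:
  assumes g: "graph V E" and es: "edge_simplicial V E" and e: "E x y"
  shows "\<exists>v\<in>V. (x = v \<or> E v x) \<and> (y = v \<or> E v y) \<and>
     (\<forall>a b. (a = v \<or> E v a) \<longrightarrow> (b = v \<or> E v b) \<longrightarrow> a \<noteq> b \<longrightarrow> E a b)"
proof -
  obtain C where C: "simplicial_clique V E C" "x \<in> C" "y \<in> C"
    using es e unfolding edge_simplicial_def by blast
  then obtain v where v: "v \<in> V" "C = closed_nbhd V E v" "is_clique V E C"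
    unfolding simplicial_clique_def by blast
  have mem: "\<And>a. a \<in> C \<longleftrightarrow> a = v \<or> E v a"
    using v g unfolding closed_nbhd_def graph_def by auto
  have "x = v \<or> E v x" "y = v \<or> E v y" using C mem by auto
  moreover have "\<forall>a b. (a = v \<or> E v a) \<longrightarrow> (b = v \<or> E v b) \<longrightarrow> a \<noteq> b \<longrightarrow> E a b"
    using v(3) mem unfolding is_clique_def by blast
  ultimately show ?thesis using v(1) by blast
qed

lemma F2:
  assumes g: "graph V E" and es: "edge_simplicial V (complement V E)"
    and xy: "x \<in> V" "y \<in> V" "x \<noteq> y" "\<not> E x y"
  shows "\<exists>w\<in>V. \<not> E w x \<and> \<not> E w y \<and>
     (\<forall>a b. a \<in> V \<longrightarrow> b \<in> V \<longrightarrow> \<not> E w a \<longrightarrow> \<not> E w b \<longrightarrow> \<not> E a b)"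
proof -
  have "complement V E x y" using xy unfolding complement_def by auto
  then obtain C where C: "simplicial_clique V (complement V E) C" "x \<in> C" "y \<in> C"
    using es unfolding edge_simplicial_def by blast
  then obtain w where w: "w \<in> V" "C = closed_nbhd V (complement V E) w"
    "is_clique V (complement V E) C"
    unfolding simplicial_clique_def by blast
  have mem: "\<And>a. a \<in> C \<longleftrightarrow> a \<in> V \<and> \<not> E w a"
    using w g unfolding closed_nbhd_def graph_def complement_def by auto
  have cl: "\<And>a b. a \<in> C \<Longrightarrow> b \<in> C \<Longrightarrow> \<not> E a b"
  proof -
    fix a b assume "a \<in> C" "b \<in> C"
    show "\<not> E a b"
    proof (cases "a = b")
      case True then show ?thesis using g unfolding graph_def by auto
    next
      case False then show ?thesis using w(3) \<open>a \<in> C\<close> \<open>b \<in> C\<close>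
        unfolding is_clique_def complement_def by auto
    qed
  qed
  have "\<not> E w x" "\<not> E w y" using C mem by auto
  moreover have "\<forall>a b. a \<in> V \<longrightarrow> b \<in> V \<longrightarrow> \<not> E w a \<longrightarrow> \<not> E w b \<longrightarrow> \<not> E a b"
    using cl mem by blast
  ultimately show ?thesis using w(1) by blast
qed

theorem proposition27:
  fixes V :: "'a set" and E :: "'a \<Rightarrow> 'a \<Rightarrow> bool"
  assumes "finite V" and "graph V E" and "cap_edge_simplicial V E"
  shows "split_graph V E"
proof -
  note g = assms(2)
  have gE: "\<And>x y. E x y \<Longrightarrow> x \<in> V \<and> y \<in> V \<and> x \<noteq> y \<and> E y x"
    using g unfolding graph_def by blast
  have irr: "\<And>x. \<not> E x x" using gE by blast
  have sym: "\<And>x y. E x y \<Longrightarrow> E y x" using gE by blast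
  have es1: "edge_simplicial V E" and es2: "edge_simplicial V (complement V E)"
    using assms(3) unfolding cap_edge_simplicial_def by auto
  define simp where "simp v \<longleftrightarrow>
     (\<forall>a b. (a = v \<or> E v a) \<longrightarrow> (b = v \<or> E v b) \<longrightarrow> a \<noteq> b \<longrightarrow> E a b)" for v
  define cosimp where "cosimp w \<longleftrightarrow>
     (\<forall>a b. a \<in> V \<longrightarrow> b \<in> V \<longrightarrow> \<not> E w a \<longrightarrow> \<not> E w b \<longrightarrow> \<not> E a b)" for w
  have f1: "\<And>x y. E x y \<Longrightarrow> \<exists>v\<in>V. (x = v \<or> E v x) \<and> (y = v \<or> E v y) \<and> simp v"
    unfolding simp_def by (rule F1[OF g es1])
  have f2: "\<And>x y. x \<in> V \<Longrightarrow> y \<in> V \<Longrightarrow> x \<noteq> y \<Longrightarrow> \<not> E x y \<Longrightarrow>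
      \<exists>w\<in>V. \<not> E w x \<and> \<not> E w y \<and> cosimp w"
    unfolding cosimp_def by (rule F2[OF g es2])
  have simpD: "\<And>v a b. simp v \<Longrightarrow> a = v \<or> E v a \<Longrightarrow> b = v \<or> E v b \<Longrightarrow> a \<noteq> b \<Longrightarrow> E a b"
    unfolding simp_def by blast
  have cosimpD: "\<And>w a b. cosimp w \<Longrightarrow> a \<in> V \<Longrightarrow> b \<in> V \<Longrightarrow> \<not> E w a \<Longrightarrow> \<not> E w b \<Longrightarrow> \<not> E a b"
    unfolding cosimp_def by blast
  have isol: "\<And>z. \<forall>u. \<not> E z u \<Longrightarrow> simp z" by (auto simp: simp_def)
  have univ: "\<And>z. z \<in> V \<Longrightarrow> \<forall>u\<in>V. u \<noteq> z \<longrightarrow> E z u \<Longrightarrow> cosimp z"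
    unfolding cosimp_def using irr by (metis (full_types))
  show ?thesis
  proof (cases "\<exists>x\<in>V. simp x \<and> cosimp x")
    case True
    then obtain x where x: "x \<in> V" "simp x" "cosimp x" by blast
    show ?thesis unfolding split_graph_def
    proof (intro exI conjI)
      show "closed_nbhd V E x \<union> {u\<in>V. \<not> E x u \<and> u \<noteq> x} = V"
        using x unfolding closed_nbhd_def by auto
      show "closed_nbhd V E x \<inter> {u\<in>V. \<not> E x u \<and> u \<noteq> x} = {}"
        unfolding closed_nbhd_def by auto
      show "is_clique V E (closed_nbhd V E x)"
        unfolding is_clique_def
      proof (intro conjI ballI impI)
        show "closed_nbhd V E x \<subseteq> V" using x(1) gE unfolding closed_nbhd_def by blast
        fix a b assume "a \<in> closed_nbhd V E x" "b \<in> closed_nbhd V E x" "a \<noteq> b"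
        then have "a = x \<or> E x a" "b = x \<or> E x b" unfolding closed_nbhd_def by auto
        then show "E a b" using simpD[OF x(2)] \<open>a \<noteq> b\<close> by blast
      qed
      show "is_stable V E {u\<in>V. \<not> E x u \<and> u \<noteq> x}"
        unfolding is_stable_def
      proof (intro conjI ballI)
        fix a b assume "a \<in> {u\<in>V. \<not> E x u \<and> u \<noteq> x}" "b \<in> {u\<in>V. \<not> E x u \<and> u \<noteq> x}"
        then show "\<not> E a b" using cosimpD[OF x(3), of a b] by blast
      qed blast
    qed
  next
    case False
    have cover: "simp z \<or> cosimp z" if z: "z \<in> V" for z
    proof (rule ccontr)
      assume nz: "\<not> (simp z \<or> cosimp z)"
      then obtain a where a: "E z a" using isol by blast
      obtain c where c: "c \<in> V" "c \<noteq> z" "\<not> E z c" using univ z nz by blast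
      obtain v where v: "v \<in> V" "z = v \<or> E v z" "simp v" using f1[OF a] by blast
      obtain w where w: "w \<in> V" "\<not> E w z" "cosimp w" using f2[OF z c(1) c(2)[symmetric]] c(3)
        by blast
      have "v \<noteq> z" using v nz by blast
      hence vz: "E v z" using v by blast
      have "w \<noteq> z" using w nz by blast
      show False
      proof (cases "E w v")
        case True
        hence "E v w" using sym by blast
        then show ?thesis using simpD[OF v(3), of w z] vz w(2) \<open>w \<noteq> z\<close> by blast
      next
        case False
        then show ?thesis using cosimpD[OF w(3) v(1) z False w(2)] vz by blast
      qed
    qed
    show ?thesis unfolding split_graph_def
    proof (intro exI conjI)
      show "{w\<in>V. cosimp w} \<union> {v\<in>V. simp v \<and> \<not> cosimp v} = V" using cover by auto
      show "{w\<in>V. cosimp w} \<inter> {v\<in>V. simp v \<and> \<not> cosimp v} = {}" by auto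
      show "is_stable V E {v\<in>V. simp v \<and> \<not> cosimp v}"
        unfolding is_stable_def
      proof (intro conjI ballI)
        fix v v' assume vv: "v \<in> {v\<in>V. simp v \<and> \<not> cosimp v}" "v' \<in> {v\<in>V. simp v \<and> \<not> cosimp v}"
        show "\<not> E v v'"
        proof
          assume e: "E v v'"
          obtain x where x: "x \<in> V" "x \<noteq> v" "\<not> E v x" using univ vv(1) by blast
          obtain w where w: "w \<in> V" "\<not> E w v" "cosimp w"
            using f2[of v x] vv(1) x by blast
          have "w \<noteq> v" using w vv by blast
          have "w \<noteq> v'" using w(2) e sym by blast
          show False
          proof (cases "E w v'")
            case True
            hence "E v' w" using sym by blast
            moreover have "E v' v" using e sym by blast
            ultimately have "E v w" using vv(2) simpD[of v' v w] \<open>w \<noteq> v\<close> by blast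
            then show ?thesis using w(2) sym by blast
          next
            case False
            then show ?thesis using cosimpD[OF w(3), of v v'] w(2) vv e by blast
          qed
        qed
      qed auto
      show "is_clique V E {w\<in>V. cosimp w}"
        unfolding is_clique_def
      proof (intro conjI ballI impI)
        fix w w' assume ww: "w \<in> {w\<in>V. cosimp w}" "w' \<in> {w\<in>V. cosimp w}" "w \<noteq> w'"
        show "E w w'"
        proof (rule ccontr)
          assume ne: "\<not> E w w'"
          have "\<not> simp w" using ww False by blast
          then obtain y where y: "E w y" using isol by blast
          obtain v where v: "v \<in> V" "w = v \<or> E v w" "simp v" using f1[OF y] by blast
          have "v \<noteq> w" using v \<open>\<not> simp w\<close> by blast
          hence vw: "E v w" using v by blast
          have nw'w: "\<not> E w' w" using ne sym by blast
          show False
          proof (cases "E w' v")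
            case True
            hence "E v w'" using sym by blast
            then show ?thesis using simpD[OF v(3), of w w'] vw ww(3) ne by blast
          next
            case False
            then show ?thesis using cosimpD[of w' v w] ww(1,2) v(1) vw nw'w False by blast
          qed
        qed
      qed auto
    qed
  qed
qed

end
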